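(* Let $\mathcal{M}=\langle \mathcal{S},\mathcal{A},\mathcal{P},\mathcal{R},\gamma\rangle$ be a deterministic finite MDP with next-state function $\mathscr{N}$, and let $d_{\sim}$ be the unique function $\mathcal{S}\times\mathcal{S}\to\mathbb{R}$ satisfying $d_{\sim}(s,t)=\max_{a\in\mathcal{A}}\left(|\mathcal{R}(s,a)-\mathcal{R}(t,a)|+\gamma\,d_{\sim}(\mathscr{N}(s,a),\mathscr{N}(t,a))\right)$. Let $(s_n,t_n,a_n)_{n\ge1}$ be any sequence of samples drawn from a distribution $\mathcal{D}$ on $\mathcal{S}\times\mathcal{S}\times\mathcal{A}$ with full support. Let $d_0\equiv0$ and for $n\ge1$ set $d_n(s,t)=d_{n-1}(s,t)$ for $(s,t)\ne(s_n,t_n)$ and $d_n(s_n,t_n)=\max\left(d_{n-1}(s_n,t_n),\ |\mathcal{R}(s_n,a_n)-\mathcal{R}(t_n,a_n)|+\gamma\,d_{n-1}(\mathscr{N}(s_n,a_n),\mathscr{N}(t_n,a_n))\right)$. Then $d_n\le d_{\sim}$ pointwise for all $n\in\mathbb{N}$.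
   Context: A finite MDP has finite state set $\mathcal{S}$, finite action set $\mathcal{A}$, transition kernel $\mathcal{P}$, bounded reward $\mathcal{R}:\mathcal{S}\times\mathcal{A}\to\mathbb{R}$, and discount $\gamma\in[0,1)$; it is deterministic if for every $s,a$ there is a unique $\mathscr{N}(s,a)$ with $\mathcal{P}(s,a)(\mathscr{N}(s,a))=1$. *)

theory Defs
  imports "HOL-Probability.Probability"
begin

definition deterministic_with :: "('s \<Rightarrow> 'a \<Rightarrow> 's pmf) \<Rightarrow> ('s \<Rightarrow> 'a \<Rightarrow> 's) \<Rightarrow> bool" where
  "deterministic_with P N \<longleftrightarrow> (\<forall>s a. pmf (P s a) (N s a) = 1)"

text \<open>Sampled iterates d_n; samples are indexed from 1 (smp 0 is unused).\<close>
primrec sampled_iter ::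
  "('s \<Rightarrow> 'a \<Rightarrow> real) \<Rightarrow> ('s \<Rightarrow> 'a \<Rightarrow> 's) \<Rightarrow> real \<Rightarrow> (nat \<Rightarrow> 's \<times> 's \<times> 'a)
     \<Rightarrow> nat \<Rightarrow> 's \<Rightarrow> 's \<Rightarrow> real" where
  "sampled_iter R N \<gamma> smp 0 = (\<lambda>s t. 0)"
| "sampled_iter R N \<gamma> smp (Suc n) =
     (\<lambda>s t. let (sn, tn, an) = smp (Suc n); d = sampled_iter R N \<gamma> smp n in
        if (s, t) = (sn, tn)
        then max (d sn tn) (\<bar>R sn an - R tn an\<bar> + \<gamma> * d (N sn an) (N tn an))
        else d s t)"

end

theory Submission
  imports Defs
begin

theorem lemma3:
  fixes P :: "'s::finite \<Rightarrow> 'a::finite \<Rightarrow> 's pmf"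
    and N :: "'s \<Rightarrow> 'a \<Rightarrow> 's"
    and R :: "'s \<Rightarrow> 'a \<Rightarrow> real"
    and \<gamma> :: real
    and dsim :: "'s \<Rightarrow> 's \<Rightarrow> real"
    and D :: "('s \<times> 's \<times> 'a) pmf"
    and smp :: "nat \<Rightarrow> 's \<times> 's \<times> 'a"
  assumes "0 \<le> \<gamma>" and "\<gamma> < 1"
    and "deterministic_with P N"
    and "\<forall>s t. dsim s t = (MAX a\<in>UNIV. \<bar>R s a - R t a\<bar> + \<gamma> * dsim (N s a) (N t a))"
    and "set_pmf D = UNIV"
    and "\<forall>n\<ge>1. smp n \<in> set_pmf D"
  shows "\<forall>n s t. sampled_iter R N \<gamma> smp n s t \<le> dsim s t"
proof -
  have ge: "\<bar>R s a - R t a\<bar> + \<gamma> * dsim (N s a) (N t a) \<le> dsim s t" for s t a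
  proof -
    have "\<bar>R s a - R t a\<bar> + \<gamma> * dsim (N s a) (N t a)
          \<le> (MAX a\<in>UNIV. \<bar>R s a - R t a\<bar> + \<gamma> * dsim (N s a) (N t a))"
      by (rule Max_ge) auto
    then show ?thesis using assms(4) by metis
  qed
  define m where "m = Min (range (\<lambda>p::'s\<times>'s. dsim (fst p) (snd p)))"
  have mle: "m \<le> dsim s t" for s t
    unfolding m_def by (rule Min_le) (auto intro: image_eqI[where x="(s,t)"])
  obtain p :: "'s\<times>'s" where pm: "dsim (fst p) (snd p) = m"
  proof -
    have "m \<in> range (\<lambda>p::'s\<times>'s. dsim (fst p) (snd p))"
      unfolding m_def by (rule Min_in) auto
    then show ?thesis using that by auto
  qed
  have nonneg: "0 \<le> dsim s t" for s t
  proof -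
    obtain a :: 'a where True by simp
    have "\<bar>R (fst p) a - R (snd p) a\<bar> + \<gamma> * dsim (N (fst p) a) (N (snd p) a) \<le> m"
      using ge pm by metis
    moreover have "\<gamma> * m \<le> \<gamma> * dsim (N (fst p) a) (N (snd p) a)"
      using mle assms(1) by (simp add: mult_left_mono)
    ultimately have "\<gamma> * m \<le> m" by linarith
    hence "(1 - \<gamma>) * m \<ge> 0" by (simp add: algebra_simps)
    hence "0 \<le> m" using assms(2) by (simp add: zero_le_mult_iff)
    thus ?thesis using mle order_trans by blast
  qed
  have "sampled_iter R N \<gamma> smp n s t \<le> dsim s t" for n s t
  proof (induction n arbitrary: s t)
    case 0
    then show ?case using nonneg by simp
  next
    case (Suc n)
    obtain sn tn an where e: "smp (Suc n) = (sn, tn, an)" by (cases "smp (Suc n)") auto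
    have "\<bar>R sn an - R tn an\<bar> + \<gamma> * sampled_iter R N \<gamma> smp n (N sn an) (N tn an) \<le> dsim sn tn"
    proof -
      have "\<gamma> * sampled_iter R N \<gamma> smp n (N sn an) (N tn an) \<le> \<gamma> * dsim (N sn an) (N tn an)"
        using Suc.IH assms(1) by (simp add: mult_left_mono)
      thus ?thesis using ge[of sn an tn] by linarith
    qed
    then show ?case using Suc.IH e by (auto simp: Let_def)
  qed
  thus ?thesis by blast
qed

end
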